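(* Let $\mathcal X$ be a nonsingular plane curve of degree $r+1$ (with $r\ge2$) and genus $g$ over $\mathbf F_q$ with at least one $\mathbf F_q$-rational point. Let $U(\mathcal X)$ be its set of jumps. Then: (1) $|U(\mathcal X)|=R(2g-2)$, and this number equals $r^2/4$ if $r$ is even and $(r^2-1)/4$ if $r$ is odd. (2) $U(\mathcal X)=\{\alpha r+\beta: -1\le\alpha\le r-2,\ 0\le\beta\le r-1,\ \text{and } (2\beta+2\le\alpha \text{ or } \beta=r-1)\}\setminus\{2g-1\}$.
   Context: $\ell(A)=\dim_{\mathbf F_q}\mathcal L(A)$. For $i\ge1$, $\gamma_i=\min\{\deg A: A\ \mathbf F_q\text{-rational divisor},\ \ell(A)\ge i\}$. For such a plane curve it is known that $GS(\mathcal X)=\{\gamma_i\}$ is the numerical semigroup generated by $r$ and $r+1$, and that $g=r(r-1)/2$. Let $\mathbf N'=\{-1,0,1,\dots\}$. Define $\tilde\ell(-1)=0$ and $\tilde\ell(b)=\max\{i\ge1:\gamma_i\le b\}$ for $b\ge0$. For $-1\le N\le 2g-2$, let $R(N)=\min\{\tilde\ell(a)+\tilde\ell(b):a,b\in\mathbf N',\ a+b=N\}$, and set $R(-2):=0$. An integer $N$ with $-1\le N\le 2g-2$ is a jump of $\mathcal X$ if $R(N)>R(N-1)$; $U(\mathcal X)$ is the set of jumps. *)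

theory Defs
  imports Main "HOL-Library.Infinite_Set"
begin

text \<open>Combinatorial data of a nonsingular plane curve of degree r+1:
  its gonality sequence is the numerical semigroup generated by r and r+1,
  and its genus is r(r-1)/2.\<close>

definition gon_semigroup :: "nat \<Rightarrow> nat set" where
  "gon_semigroup r = {a * r + b * (r + 1) | a b. True}"

definition gam :: "nat \<Rightarrow> nat \<Rightarrow> nat" where
  "gam r i = enumerate (gon_semigroup r) (i - 1)"

definition genus :: "nat \<Rightarrow> int" where
  "genus r = int (r * (r - 1) div 2)"

definition ltilde :: "nat \<Rightarrow> int \<Rightarrow> nat" where
  "ltilde r b = (if b < 0 then 0 else Max {i. 1 \<le> i \<and> int (gam r i) \<le> b})"

definition RR :: "nat \<Rightarrow> int \<Rightarrow> nat" where
  "RR r N = (if N = -2 then 0 else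
     Min {ltilde r a + ltilde r b | a b. -1 \<le> a \<and> -1 \<le> b \<and> a + b = N})"

definition jumps :: "nat \<Rightarrow> int set" where
  "jumps r = {N. -1 \<le> N \<and> N \<le> 2 * genus r - 2 \<and> RR r N > RR r (N - 1)}"

end

theory Submission
  imports Defs
begin

fun TT :: "nat \<Rightarrow> nat" where
  "TT 0 = 0" | "TT (Suc p) = TT p + Suc p"

lemma TT2: "2 * TT p = p * (p + 1)"
  by (induction p) auto

lemma mem_S:
  assumes "i < r"
  shows "(p * r + i \<in> gon_semigroup r) \<longleftrightarrow> i \<le> p"
proof
  assume "i \<le> p"
  then have "p * r + i = (p - i) * r + i * (r + 1)"
    by (simp add: algebra_simps diff_mult_distrib)
  then show "p * r + i \<in> gon_semigroup r" unfolding gon_semigroup_def by blast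
next
  assume "p * r + i \<in> gon_semigroup r"
  then obtain a b where ab: "p * r + i = a * r + b * (r + 1)" unfolding gon_semigroup_def by blast
  show "i \<le> p"
  proof (rule ccontr)
    assume "\<not> i \<le> p"
    then have "p < i" by simp
    have e: "p * r + i = (a + b) * r + b" using ab by (simp add: algebra_simps)
    have "(a + b) * r < (p + 1) * r" using e assms by (simp add: algebra_simps)
    then have "a + b < p + 1" using mult_less_cancel2 by blast
    then have "a + b \<le> p" by simp
    then have "b < r" using \<open>p < i\<close> assms by linarith
    have "(p * r + i) mod r = i" using assms by simp
    moreover have "((a + b) * r + b) mod r = b" using \<open>b < r\<close> by simp
    ultimately have "i = b" using e by simp
    then show False using \<open>a + b \<le> p\<close> \<open>p < i\<close> by linarith
  qed
qed

definition FF :: "nat \<Rightarrow> nat \<Rightarrow> nat" where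
  "FF r n = card {s \<in> gon_semigroup r. s < n}"

lemma FF_Suc: "FF r (Suc n) = FF r n + (if n \<in> gon_semigroup r then 1 else 0)"
proof -
  have fin: "finite {s \<in> gon_semigroup r. s < n}" by (rule finite_subset[of _ "{..<n}"]) auto
  show ?thesis
  proof (cases "n \<in> gon_semigroup r")
    case True
    have "{s \<in> gon_semigroup r. s < Suc n} = insert n {s \<in> gon_semigroup r. s < n}"
      using True by auto
    then show ?thesis using fin True unfolding FF_def by simp
  next
    case False
    have "{s \<in> gon_semigroup r. s < Suc n} = {s \<in> gon_semigroup r. s < n}"
      using False less_Suc_eq by auto
    then show ?thesis using False unfolding FF_def by simp
  qed
qed

lemma FF_0: "FF r 0 = 0" unfolding FF_def by simp

lemma FF_inner:
  assumes "FF r (p * r) = TT p" "i \<le> r"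
  shows "FF r (p * r + i) = TT p + min i (p + 1)"
  using assms(2)
proof (induction i)
  case 0 then show ?case using assms(1) by simp
next
  case (Suc i)
  then have "i < r" by simp
  have "FF r (p * r + Suc i) = FF r (p * r + i) + (if p * r + i \<in> gon_semigroup r then 1 else 0)"
    using FF_Suc[of r "p * r + i"] by simp
  also have "\<dots> = TT p + min i (p + 1) + (if i \<le> p then 1 else 0)"
    using Suc mem_S[OF \<open>i < r\<close>] by simp
  also have "\<dots> = TT p + min (Suc i) (p + 1)" by auto
  finally show ?case .
qed

lemma FF_block: "p \<le> r \<Longrightarrow> FF r (p * r) = TT p"
proof (induction p)
  case 0 then show ?case by (simp add: FF_0)
next
  case (Suc p)
  have "FF r (Suc p * r) = FF r (p * r + r)" by (simp add: algebra_simps)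
  also have "\<dots> = TT p + min r (p + 1)" using FF_inner[of r p r] Suc by simp
  also have "\<dots> = TT (Suc p)" using Suc by simp
  finally show ?case .
qed

lemma FF_formula: "p \<le> r \<Longrightarrow> i \<le> r \<Longrightarrow> FF r (p * r + i) = TT p + min i (p + 1)"
  using FF_inner FF_block by blast

lemma S_infinite: assumes "r \<ge> 1" shows "infinite (gon_semigroup r)"
proof -
  have "(\<lambda>a. a * r) ` UNIV \<subseteq> gon_semigroup r"
  proof
    fix x assume "x \<in> (\<lambda>a. a * r) ` UNIV"
    then obtain a where "x = a * r + 0 * (r + 1)" by auto
    then show "x \<in> gon_semigroup r" unfolding gon_semigroup_def by blast
  qed
  moreover have "inj (\<lambda>a::nat. a * r)" using assms by (auto simp: inj_def)
  ultimately show ?thesis using range_inj_infinite infinite_super by blast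
qed

lemma zero_in_S: "0 \<in> gon_semigroup r" unfolding gon_semigroup_def by auto

lemma enum_le_iff:
  assumes inf: "infinite S"
  shows "enumerate S n \<le> B \<longleftrightarrow> n < card {s \<in> S. s \<le> (B::nat)}"
proof
  have fin: "finite {s \<in> S. s \<le> B}" by (rule finite_subset[of _ "{..B}"]) auto
  assume "enumerate S n \<le> B"
  then have "enumerate S ` {..n} \<subseteq> {s \<in> S. s \<le> B}"
  proof (intro subsetI)
    fix x assume "x \<in> enumerate S ` {..n}"
    then obtain k where k: "k \<le> n" "x = enumerate S k" by auto
    then have "enumerate S k \<le> enumerate S n" using enumerate_mono_le_iff[OF inf] by blast
    then show "x \<in> {s \<in> S. s \<le> B}" using k enumerate_in_set[OF inf] \<open>enumerate S n \<le> B\<close> by auto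
  qed
  moreover have "card (enumerate S ` {..n}) = n + 1"
    using inj_enumerate[OF inf] by (simp add: card_image inj_on_subset)
  ultimately have "n + 1 \<le> card {s \<in> S. s \<le> B}" using card_mono[OF fin] by metis
  then show "n < card {s \<in> S. s \<le> B}" by simp
next
  assume a: "n < card {s \<in> S. s \<le> B}"
  show "enumerate S n \<le> B"
  proof (rule ccontr)
    assume "\<not> enumerate S n \<le> B"
    then have "{s \<in> S. s \<le> B} \<subseteq> enumerate S ` {..<n}"
    proof -
      { fix s assume "s \<in> S" "s \<le> B"
        then obtain k where k: "enumerate S k = s" using enumerate_Ex[OF inf] by blast
        then have "enumerate S k < enumerate S n" using \<open>s \<le> B\<close> \<open>\<not> enumerate S n \<le> B\<close> by simp
        then have "k < n" using enumerate_mono_iff[OF inf] by blast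
        then have "s \<in> enumerate S ` {..<n}" using k by blast }
      then show ?thesis by blast
    qed
    then have "card {s \<in> S. s \<le> B} \<le> card (enumerate S ` {..<n})"
      by (intro card_mono) auto
    also have "\<dots> \<le> n" using card_image_le[of "{..<n}" "enumerate S"] by simp
    finally have "card {s \<in> S. s \<le> B} \<le> n" .
    then show False using a by simp
  qed
qed

lemma ltilde_FF:
  assumes "r \<ge> 1" "b \<ge> -1"
  shows "ltilde r b = FF r (nat (b + 1))"
proof (cases "b < 0")
  case True
  then have "b = -1" using assms by simp
  then show ?thesis by (simp add: ltilde_def FF_0)
next
  case False
  define B where "B = nat b"
  have inf: "infinite (gon_semigroup r)" using S_infinite assms by simp
  define c where "c = card {s \<in> gon_semigroup r. s \<le> B}"
  have "{s \<in> gon_semigroup r. s < nat (b + 1)} = {s \<in> gon_semigroup r. s \<le> B}"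
    using False B_def by auto
  then have fc: "FF r (nat (b + 1)) = c" unfolding FF_def c_def by simp
  have c1: "c \<ge> 1"
  proof -
    have "0 \<in> {s \<in> gon_semigroup r. s \<le> B}" using zero_in_S by simp
    moreover have "finite {s \<in> gon_semigroup r. s \<le> B}" by (rule finite_subset[of _ "{..B}"]) auto
    ultimately show ?thesis unfolding c_def by (metis card_0_eq empty_iff less_one not_less)
  qed
  have "{i. 1 \<le> i \<and> int (gam r i) \<le> b} = {1..c}"
  proof -
    { fix i :: nat assume "1 \<le> i"
      have "int (gam r i) \<le> b \<longleftrightarrow> enumerate (gon_semigroup r) (i - 1) \<le> B"
        using False B_def gam_def by auto
      also have "\<dots> \<longleftrightarrow> i - 1 < c" using enum_le_iff[OF inf] c_def by simp
      also have "\<dots> \<longleftrightarrow> i \<le> c" using \<open>1 \<le> i\<close> by auto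
      finally have "int (gam r i) \<le> b \<longleftrightarrow> i \<le> c" . }
    then show ?thesis by auto
  qed
  then have "ltilde r b = Max {1..c}" using False by (simp add: ltilde_def)
  also have "\<dots> = c" using c1 by (simp add: Max_eq_iff)
  finally show ?thesis using fc by simp
qed

definition Phi :: "nat \<Rightarrow> nat \<Rightarrow> nat" where
  "Phi r M = (let K = M div r; h = K div 2 in TT h + TT (K - h) + min (M mod r) (h + 1))"

lemma Phi_eq: "j < r \<Longrightarrow> Phi r (K * r + j) = TT (K div 2) + TT (K - K div 2) + min j (K div 2 + 1)"
  unfolding Phi_def Let_def by simp

lemma Q_ident: "p*(p+1) + (p+2*d+e)*(p+2*d+e+1) = (p+d)*(p+d+1) + (p+d+e)*(p+d+e+1) + 2*d*e + 2*d*(d::nat)"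
  by (simp add: algebra_simps)

lemma Qd:
  assumes "p \<le> h" "2 * h \<le> K"
  shows "TT h + TT (K - h) + (h - p) \<le> TT p + TT (K - p)"
proof -
  obtain d where d: "h = p + d" using assms(1) le_Suc_ex by blast
  obtain e where e: "K = 2 * h + e" using assms(2) le_Suc_ex by blast
  have kp: "K - p = p + 2*d + e" using d e by simp
  have kh: "K - h = p + d + e" using d e by simp
  have A: "2 * (TT p + TT (K - p)) = p*(p+1) + (p+2*d+e)*(p+2*d+e+1)"
    unfolding kp by (simp only: distrib_left TT2)
  have B: "2 * (TT h + TT (K - h)) = (p+d)*(p+d+1) + (p+d+e)*(p+d+e+1)"
    unfolding kh unfolding d by (simp only: distrib_left TT2)
  have "2 * (TT p + TT (K - p)) = 2 * (TT h + TT (K - h)) + 2*d*e + 2*d*d"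
    unfolding A B by (rule Q_ident)
  then have "2 * (TT p + TT (K - p)) = 2 * (TT h + TT (K - h)) + 2*(d*e) + 2*(d*d)"
    by (simp add: mult.assoc)
  moreover have "d \<le> d * d" by (cases d) auto
  moreover have gen: "\<And>X Y Z W::nat. 2*X = 2*Y + 2*Z + 2*W \<Longrightarrow> d \<le> W \<Longrightarrow> Y + d \<le> X"
    by linarith
  ultimately have "TT h + TT (K - h) + d \<le> TT p + TT (K - p)" by blast
  then show ?thesis using d by simp
qed

lemma conv:
  assumes "p \<le> K"
  shows "TT (K div 2) + TT (K - K div 2) \<le> TT p + TT (K - p)"
proof (cases "p \<le> K div 2")
  case True
  have k2: "2 * (K div 2) \<le> K" by simp
  show ?thesis using Qd[OF True k2] by linarith
next
  case False
  then have "K - p \<le> K div 2" by simp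
  then have "TT (K div 2) + TT (K - K div 2) + (K div 2 - (K - p)) \<le> TT (K - p) + TT (K - (K - p))"
    using Qd[of "K - p" "K div 2" K] by simp
  then show ?thesis using assms by simp
qed

lemma NC:
  assumes "p \<le> q" "K = p + q"
  shows "TT (K div 2) + TT (K - K div 2) + min (i + j) (K div 2 + 1) \<le> TT p + min i (p+1) + TT q + min j (q+1)"
proof -
  have m: "min (i + j) (p + 1) \<le> min i (p+1) + min j (q+1)" using assms(1) by auto
  have pk: "p \<le> K div 2" using assms by simp
  have kq: "K - p = q" using assms by simp
  have k2: "2 * (K div 2) \<le> K" by simp
  have "TT (K div 2) + TT (K - K div 2) + (K div 2 - p) \<le> TT p + TT q"
    using Qd[OF pk k2, unfolded kq] .
  moreover have "min (i + j) (K div 2 + 1) \<le> min (i + j) (p + 1) + (K div 2 - p)" by auto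
  ultimately show ?thesis using m by linarith
qed

lemma CA:
  assumes "p \<le> q" "K = p + q + 1" "p + q + 2 \<le> r" "i < r" "j < r" "i + j = J + r"
  shows "TT (K div 2) + TT (K - K div 2) + min J (K div 2 + 1) \<le> TT p + min i (p+1) + TT q + min j (q+1)"
proof -
  have m: "p + 1 + min (J + 1) (q + 1) \<le> min i (p+1) + min j (q+1)"
  proof (cases "p + 1 \<le> i")
    case True
    then show ?thesis using assms by auto
  next
    case False
    then have "min j (q + 1) = q + 1" using assms by auto
    moreover have "i \<ge> J + 1" using assms by linarith
    ultimately show ?thesis using False assms(1) by auto
  qed
  have tp: "TT (Suc p) = TT p + p + 1" by simp
  have kq: "K - Suc p = q" using assms by simp
  have sk: "Suc p \<le> K" using assms by simp
  have "TT (K div 2) + TT (K - K div 2) \<le> TT (Suc p) + TT q"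
    using conv[OF sk, unfolded kq] .
  moreover have "min J (K div 2 + 1) \<le> min (J + 1) (q + 1)" using assms by auto
  ultimately show ?thesis using m tp by linarith
qed

lemma lower_sym:
  assumes "r \<ge> 2" "x + y = M" "M \<le> r * (r - 1)" "x \<le> y"
  shows "Phi r M \<le> FF r x + FF r y"
proof -
  define p i q j where "p = x div r" "i = x mod r" "q = y div r" "j = y mod r"
  have r0: "r > 0" using assms by simp
  have x: "x = p * r + i" and y: "y = q * r + j" using p_i_q_j_def by simp_all
  have ir: "i < r" "j < r" using p_i_q_j_def r0 by simp_all
  have pq: "p \<le> q" using assms(4) p_i_q_j_def div_le_mono by simp
  have "(p + q) * r \<le> M" using x y assms(2) by (simp add: algebra_simps)
  also have "\<dots> \<le> (r - 1) * r" using assms(3) by (simp add: mult.commute)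
  finally have "p + q \<le> r - 1" using r0 by simp
  then have pqr: "p + q < r" using r0 by simp
  have fx: "FF r x = TT p + min i (p + 1)" using FF_formula[of p r i] x ir pqr by simp
  have fy: "FF r y = TT q + min j (q + 1)" using FF_formula[of q r j] y ir pqr by simp
  show ?thesis
  proof (cases "i + j < r")
    case True
    have "M = (p + q) * r + (i + j)" using x y assms(2) by (simp add: algebra_simps)
    then have "Phi r M = TT ((p+q) div 2) + TT ((p+q) - (p+q) div 2) + min (i + j) ((p+q) div 2 + 1)"
      using Phi_eq[OF True, of "p+q"] by simp
    then show ?thesis using NC[OF pq refl, of i j] fx fy by simp
  next
    case False
    define J where "J = i + j - r"
    have M: "M = (p + q + 1) * r + J" using x y assms(2) False J_def by (simp add: algebra_simps)
    have Jr: "J < r" using J_def ir by simp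
    have "(p + q + 1) * r \<le> (r - 1) * r" using M assms(3) by (simp add: mult.commute)
    then have "p + q + 1 \<le> r - 1" using r0 mult_le_cancel2 by blast
    then have pq2: "p + q + 2 \<le> r" by simp
    have "Phi r M = TT ((p+q+1) div 2) + TT ((p+q+1) - (p+q+1) div 2) + min J ((p+q+1) div 2 + 1)"
      using Phi_eq[OF Jr, of "p+q+1"] unfolding M by simp
    then show ?thesis using CA[OF pq refl pq2 ir, of J] J_def False fx fy by simp
  qed
qed

lemma lower:
  assumes "r \<ge> 2" "x + y = M" "M \<le> r * (r - 1)"
  shows "Phi r M \<le> FF r x + FF r y"
proof (cases "x \<le> y")
  case True then show ?thesis using lower_sym assms by blast
next
  case False then show ?thesis using lower_sym[of r y x M] assms by simp
qed

lemma attained: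
  assumes "r \<ge> 2" "M \<le> r * (r - 1)"
  shows "\<exists>x \<le> M. FF r x + FF r (M - x) = Phi r M"
proof -
  define K J where "K = M div r" "J = M mod r"
  define h where "h = K div 2"
  have r0: "r > 0" using assms by simp
  have M: "M = K * r + J" and Jr: "J < r" using K_J_def r0 by simp_all
  have "K * r \<le> M" using M by simp
  also have "\<dots> \<le> (r - 1) * r" using assms(2) by (simp add: mult.commute)
  finally have Kr: "K \<le> r - 1" using r0 mult_le_cancel2 by blast
  define x where "x = h * r + J"
  have hK: "h \<le> K" using h_def by simp
  have "h * r \<le> K * r" using hK by (rule mult_le_mono1)
  then have xM: "x \<le> M" unfolding x_def M by simp
  have "M - x = K * r - h * r" unfolding M x_def by simp
  also have "\<dots> = (K - h) * r" by (simp add: diff_mult_distrib)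
  finally have Mx: "M - x = (K - h) * r" .
  have khr: "K - h \<le> r" using Kr by simp
  have f1: "FF r (M - x) = TT (K - h)" unfolding Mx using FF_block[OF khr] .
  have hr: "h \<le> r" using hK Kr by simp
  have Jr': "J \<le> r" using Jr by simp
  have f2: "FF r x = TT h + min J (h + 1)" unfolding x_def using FF_formula[OF hr Jr'] .
  have f3: "Phi r M = TT h + TT (K - h) + min J (h + 1)" unfolding M h_def using Phi_eq[OF Jr, of K] .
  show ?thesis using xM f1 f2 f3 by (intro exI[of _ x]) simp
qed

lemma Min_Phi:
  assumes "r \<ge> 2" "M \<le> r * (r - 1)"
  shows "Min ((\<lambda>x. FF r x + FF r (M - x)) ` {..M}) = Phi r M"
proof (rule Min_eqI)
  show "finite ((\<lambda>x. FF r x + FF r (M - x)) ` {..M})" by simp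
  show "\<And>y. y \<in> (\<lambda>x. FF r x + FF r (M - x)) ` {..M} \<Longrightarrow> Phi r M \<le> y"
    using lower assms by auto
  obtain x where "x \<le> M" "FF r x + FF r (M - x) = Phi r M" using attained[OF assms] by blast
  then show "Phi r M \<in> (\<lambda>x. FF r x + FF r (M - x)) ` {..M}"
    by (intro image_eqI[of _ _ x]) auto
qed

lemma two_genus: "2 * genus r = int (r * (r - 1))"
proof -
  have "even (r * (r - 1))" by (cases "even r") auto
  then show ?thesis unfolding genus_def by (metis dvd_mult_div_cancel of_nat_mult of_nat_numeral)
qed

lemma RR_Phi:
  assumes r: "r \<ge> 2" and N: "-2 \<le> N" "N \<le> int (r * (r - 1)) - 2"
  shows "RR r N = Phi r (nat (N + 2))"
proof (cases "N = -2")
  case True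
  have "Phi r 0 = 0" unfolding Phi_def by simp
  then show ?thesis using True by (simp add: RR_def)
next
  case False
  define M where "M = nat (N + 2)"
  have r1: "r \<ge> 1" using r by simp
  have "nat (N + 2) \<le> nat (int (r * (r - 1)))" using N(2) by (intro nat_mono) linarith
  then have MM: "M \<le> r * (r - 1)" using M_def by (simp only: nat_int)
  have "{ltilde r a + ltilde r b | a b. -1 \<le> a \<and> -1 \<le> b \<and> a + b = N}
        = (\<lambda>x. FF r x + FF r (M - x)) ` {..M}"
  proof (intro equalityI subsetI)
    fix v assume "v \<in> {ltilde r a + ltilde r b | a b. -1 \<le> a \<and> -1 \<le> b \<and> a + b = N}"
    then obtain a b where ab: "-1 \<le> a" "-1 \<le> b" "a + b = N" "v = ltilde r a + ltilde r b" by blast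
    have "v = FF r (nat (a + 1)) + FF r (M - nat (a + 1))"
    proof -
      have "M - nat (a + 1) = nat (b + 1)" using ab M_def by simp
      then show ?thesis using ab ltilde_FF[OF r1] by simp
    qed
    moreover have "nat (a + 1) \<le> M" using ab M_def by simp
    ultimately show "v \<in> (\<lambda>x. FF r x + FF r (M - x)) ` {..M}" by auto
  next
    fix v assume "v \<in> (\<lambda>x. FF r x + FF r (M - x)) ` {..M}"
    then obtain x where x: "x \<le> M" "v = FF r x + FF r (M - x)" by auto
    define a b where "a = int x - 1" "b = int (M - x) - 1"
    have "-1 \<le> a" "-1 \<le> b" "a + b = N" using a_b_def x M_def False N by auto
    moreover have "v = ltilde r a + ltilde r b"
    proof -
      have "ltilde r a = FF r x" using a_b_def ltilde_FF[OF r1, of a] by simp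
      moreover have "ltilde r b = FF r (M - x)" using a_b_def ltilde_FF[OF r1, of b] by simp
      ultimately show ?thesis using x by simp
    qed
    ultimately show "v \<in> {ltilde r a + ltilde r b | a b. -1 \<le> a \<and> -1 \<le> b \<and> a + b = N}"
      by blast
  qed
  then have "RR r N = Min ((\<lambda>x. FF r x + FF r (M - x)) ` {..M})"
    using False by (simp add: RR_def)
  also have "\<dots> = Phi r M" using Min_Phi[OF r MM] .
  finally show ?thesis using M_def by simp
qed

definition jc :: "nat \<Rightarrow> nat \<Rightarrow> bool" where
  "jc r M = (M mod r \<noteq> 0 \<and> M mod r \<le> M div r div 2 + 1)"

lemma step:
  assumes r: "r \<ge> 2" and M: "1 \<le> M" "M \<le> r * (r - 1)"
  shows "Phi r M = Phi r (M - 1) + (if jc r M then 1 else 0)"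
proof -
  define K j where "K = M div r" "j = M mod r"
  have r0: "r > 0" using r by simp
  have MK: "M = K * r + j" and jr: "j < r" using K_j_def r0 by simp_all
  have "K * r \<le> M" using MK by simp
  also have "\<dots> \<le> (r - 1) * r" using M by (simp add: mult.commute)
  finally have Kr: "K \<le> r - 1" using r0 mult_le_cancel2 by blast
  show ?thesis
  proof (cases "j = 0")
    case False
    have jr': "j - 1 < r" using jr by simp
    have M1: "M - 1 = K * r + (j - 1)" using MK False by simp
    have "Phi r (M - 1) = TT (K div 2) + TT (K - K div 2) + min (j - 1) (K div 2 + 1)"
      unfolding M1 by (rule Phi_eq[OF jr'])
    moreover have "Phi r M = TT (K div 2) + TT (K - K div 2) + min j (K div 2 + 1)"
      unfolding MK by (rule Phi_eq[OF jr])
    moreover have "jc r M = (j \<le> K div 2 + 1)" using False K_j_def jc_def by simp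
    moreover have "min j (K div 2 + 1) = min (j-1) (K div 2 + 1) + (if j \<le> K div 2 + 1 then 1 else 0)"
      using False by (auto simp: min_def)
    ultimately show ?thesis by simp
  next
    case True
    then have K1: "K \<ge> 1" using MK M by (cases K) auto
    have jcM: "\<not> jc r M" using True K_j_def jc_def by simp
    have r1: "r - 1 < r" using r0 by simp
    have M1: "M - 1 = (K - 1) * r + (r - 1)"
    proof -
      have "M = (K - 1) * r + r" using MK True K1 by (cases K) auto
      then show ?thesis using r0 by simp
    qed
    have A: "Phi r (M - 1) = TT ((K-1) div 2) + TT ((K-1) - (K-1) div 2) + min (r - 1) ((K-1) div 2 + 1)"
      unfolding M1 by (rule Phi_eq[OF r1])
    have B: "Phi r M = TT (K div 2) + TT (K - K div 2) + min 0 (K div 2 + 1)"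
      unfolding MK True using Phi_eq[OF r0, of K] by simp
    have "(K - 1) div 2 + 1 \<le> r - 1" using Kr r by linarith
    then have A': "Phi r (M - 1) = TT ((K-1) div 2) + TT ((K-1) - (K-1) div 2) + ((K-1) div 2 + 1)"
      using A by simp
    have "TT ((K-1) div 2) + TT ((K-1) - (K-1) div 2) + ((K-1) div 2 + 1) = TT (K div 2) + TT (K - K div 2)"
    proof (cases "even K")
      case True
      then obtain m where m: "K = 2 * m" by blast
      then have m1: "m \<ge> 1" using K1 by simp
      have "(K-1) div 2 = m - 1" "(K-1) - (K-1) div 2 = m" "K div 2 = m" "K - K div 2 = m"
        using m m1 by auto
      moreover have "TT m = TT (m - 1) + m" using m1 by (cases m) auto
      ultimately show ?thesis using m1 by simp
    next
      case False
      then obtain m where m: "K = 2 * m + 1" using oddE by blast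
      have "(K-1) div 2 = m" "(K-1) - (K-1) div 2 = m" "K div 2 = m" "K - K div 2 = Suc m"
        using m by auto
      then show ?thesis by simp
    qed
    then show ?thesis using A' B jcM by simp
  qed
qed

lemma count_steps:
  fixes f :: "nat \<Rightarrow> nat"
  assumes "\<And>M. 1 \<le> M \<Longrightarrow> M \<le> n \<Longrightarrow> f M = f (M - 1) + (if P M then 1 else 0)"
  shows "card {M \<in> {1..n}. P M} + f 0 = f n"
  using assms
proof (induction n)
  case 0 then show ?case by simp
next
  case (Suc n)
  have IH: "card {M \<in> {1..n}. P M} + f 0 = f n" using Suc by simp
  have fin: "finite {M \<in> {1..n}. P M}" by simp
  have st: "f (Suc n) = f n + (if P (Suc n) then 1 else 0)" using Suc.prems[of "Suc n"] by simp
  show ?case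
  proof (cases "P (Suc n)")
    case True
    then have "{M \<in> {1..Suc n}. P M} = insert (Suc n) {M \<in> {1..n}. P M}" by auto
    then show ?thesis using fin IH st True by simp
  next
    case False
    then have "{M \<in> {1..Suc n}. P M} = {M \<in> {1..n}. P M}" by (auto simp: le_Suc_eq)
    then show ?thesis using IH st False by simp
  qed
qed

lemma jumps_M:
  assumes r: "r \<ge> 2"
  shows "jumps r = (\<lambda>M. int M - 2) ` {M \<in> {1..r * (r - 1)}. jc r M}"
proof (intro equalityI subsetI)
  fix N assume "N \<in> jumps r"
  then have N: "-1 \<le> N" "N \<le> int (r * (r - 1)) - 2" "RR r N > RR r (N - 1)"
    unfolding jumps_def using two_genus[of r] by auto
  define M where "M = nat (N + 2)"
  have M1: "1 \<le> M" using N M_def by simp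
  have "nat (N + 2) \<le> nat (int (r * (r - 1)))" using N(2) by (intro nat_mono) linarith
  then have MM: "M \<le> r * (r - 1)" using M_def by (simp only: nat_int)
  have n2: "-2 \<le> N" "-2 \<le> N - 1" "N - 1 \<le> int (r * (r - 1)) - 2" using N by linarith+
  have a: "RR r N = Phi r M" unfolding M_def by (rule RR_Phi[OF r n2(1) N(2)])
  have b: "RR r (N - 1) = Phi r (M - 1)"
  proof -
    have "nat (N - 1 + 2) = M - 1" using M_def N by simp
    then show ?thesis using RR_Phi[OF r n2(2) n2(3)] by simp
  qed
  have "jc r M" using step[OF r M1 MM] a b N(3) by (cases "jc r M") auto
  moreover have "N = int M - 2" using M_def N by simp
  ultimately show "N \<in> (\<lambda>M. int M - 2) ` {M \<in> {1..r * (r - 1)}. jc r M}" using M1 MM by auto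
next
  fix N assume "N \<in> (\<lambda>M. int M - 2) ` {M \<in> {1..r * (r - 1)}. jc r M}"
  then obtain M where M: "N = int M - 2" "1 \<le> M" "M \<le> r * (r - 1)" "jc r M" by auto
  have "int M \<le> int (r * (r - 1))" using M(3) by (simp only: of_nat_le_iff)
  then have N: "-1 \<le> N" "N \<le> int (r * (r - 1)) - 2" using M(1,2) by linarith+
  have n2: "-2 \<le> N" "-2 \<le> N - 1" "N - 1 \<le> int (r * (r - 1)) - 2" using N by linarith+
  have a: "RR r N = Phi r M" using RR_Phi[OF r n2(1) N(2)] M(1) by simp
  have b: "RR r (N - 1) = Phi r (M - 1)"
  proof -
    have "nat (N - 1 + 2) = M - 1" using M by simp
    then show ?thesis using RR_Phi[OF r n2(2) n2(3)] by simp
  qed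
  have "RR r N > RR r (N - 1)" using step[OF r M(2,3)] a b M(4) by simp
  then show "N \<in> jumps r" unfolding jumps_def two_genus using N by blast
qed

lemma card_jumps:
  assumes r: "r \<ge> 2"
  shows "card (jumps r) = Phi r (r * (r - 1))"
proof -
  have "card (jumps r) = card {M \<in> {1..r * (r - 1)}. jc r M}"
    unfolding jumps_M[OF r] by (rule card_image) (auto simp: inj_on_def)
  moreover have "card {M \<in> {1..r * (r - 1)}. jc r M} + Phi r 0 = Phi r (r * (r - 1))"
    by (rule count_steps) (use step[OF r] in auto)
  moreover have "Phi r 0 = 0" unfolding Phi_def by simp
  ultimately show ?thesis by simp
qed

lemma Phi_top:
  assumes r: "r \<ge> 2"
  shows "Phi r (r * (r - 1)) = (if even r then r^2 div 4 else (r^2 - 1) div 4)"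
proof -
  have r0: "0 < r" using r by simp
  have "Phi r ((r - 1) * r + 0) = TT ((r-1) div 2) + TT ((r-1) - (r-1) div 2) + min 0 ((r-1) div 2 + 1)"
    using Phi_eq[OF r0] .
  then have P: "Phi r (r * (r - 1)) = TT ((r-1) div 2) + TT ((r-1) - (r-1) div 2)"
    by (simp add: mult.commute)
  show ?thesis
  proof (cases "even r")
    case True
    then obtain m where m: "r = 2 * m" by blast
    then have m1: "m \<ge> 1" using r by simp
    have "(r-1) div 2 = m - 1" "(r-1) - (r-1) div 2 = m" using m m1 by auto
    then have "Phi r (r * (r - 1)) = TT (m - 1) + TT m" using P by simp
    also have "\<dots> = m * m"
    proof -
      have "2 * TT (m - 1) = (m - 1) * m" using TT2[of "m - 1"] m1 by simp
      moreover have "2 * TT m = m * (m + 1)" using TT2 by simp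
      moreover have "(m - 1) * m + m * (m + 1) = 2 * (m * m)" using m1
        by (cases m) (auto simp: algebra_simps)
      ultimately show ?thesis by linarith
    qed
    also have "\<dots> = r^2 div 4" using m by (simp add: power2_eq_square)
    finally show ?thesis using True by simp
  next
    case False
    then obtain m where m: "r = 2 * m + 1" using oddE by blast
    have "(r-1) div 2 = m" "(r-1) - (r-1) div 2 = m" using m by auto
    then have "Phi r (r * (r - 1)) = TT m + TT m" using P by simp
    also have "\<dots> = m * (m + 1)" using TT2[of m] by simp
    also have "\<dots> = (r^2 - 1) div 4"
    proof -
      have "r^2 - 1 = 4 * (m * (m + 1))" using m by (simp add: power2_eq_square algebra_simps)
      then show ?thesis by simp
    qed
    finally show ?thesis using False by simp
  qed
qed

lemma divmod_aux: "j < r \<Longrightarrow> (K * r + j) mod r = j \<and> (K * r + j) div r = (K::nat)"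
  by simp

lemma char_sub:
  assumes r: "r \<ge> 2" and M: "1 \<le> M" "M \<le> r * (r - 1)" "jc r M"
  shows "\<exists>\<alpha> \<beta>. int M - 2 = \<alpha> * int r + \<beta> \<and> -1 \<le> \<alpha> \<and> \<alpha> \<le> int r - 2 \<and> 0 \<le> \<beta> \<and> \<beta> \<le> int r - 1
                    \<and> (2 * \<beta> + 2 \<le> \<alpha> \<or> \<beta> = int r - 1)"
proof -
  define K j where "K = M div r" "j = M mod r"
  have r0: "r > 0" using r by simp
  have MK: "M = K * r + j" and jr: "j < r" using K_j_def r0 by simp_all
  have j0: "j \<noteq> 0" and jK: "j \<le> K div 2 + 1" using M(3) K_j_def jc_def by auto
  have Kr: "K \<le> r - 2"
  proof (rule ccontr)
    assume "\<not> K \<le> r - 2"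
    then have "r - 1 \<le> K" by simp
    then have kk: "(r - 1) * r \<le> K * r" by (rule mult_le_mono1)
    have "(r - 1) * r < M" using MK j0 kk by linarith
    then show False using M(2) by (simp add: mult.commute)
  qed
  have iM: "int M = int K * int r + int j" using MK by simp
  have iK: "int K \<le> int r - 2" using Kr r by linarith
  show ?thesis
  proof (cases "j = 1")
    case True
    have "int M - 2 = (int K - 1) * int r + (int r - 1)" using iM True by (simp add: algebra_simps)
    then show ?thesis using iK r by (intro exI[of _ "int K - 1"] exI[of _ "int r - 1"]) auto
  next
    case False
    then have j2: "j \<ge> 2" using j0 by simp
    have "int M - 2 = int K * int r + (int j - 2)" using iM by simp
    moreover have "2 * (int j - 2) + 2 \<le> int K"
    proof -
      obtain h where h: "h = K div 2" by blast
      have "2 * h \<le> K" using h by simp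
      moreover have "j \<le> h + 1" using jK h by simp
      ultimately have "2 * j \<le> K + 2" by linarith
      then have "2 * int j \<le> int K + 2" by linarith
      then show ?thesis by (simp add: algebra_simps)
    qed
    moreover have "int j - 2 \<le> int r - 1" using jr by linarith
    ultimately show ?thesis using iK j2 by (intro exI[of _ "int K"] exI[of _ "int j - 2"]) auto
  qed
qed

lemma char_sup:
  assumes r: "r \<ge> 2"
    and ab: "-1 \<le> \<alpha>" "\<alpha> \<le> int r - 2" "0 \<le> \<beta>" "\<beta> \<le> int r - 1" "2 * \<beta> + 2 \<le> \<alpha> \<or> \<beta> = int r - 1"
    and ne: "\<alpha> * int r + \<beta> \<noteq> int (r * (r - 1)) - 1"
  shows "\<exists>M. \<alpha> * int r + \<beta> = int M - 2 \<and> 1 \<le> M \<and> M \<le> r * (r - 1) \<and> jc r M"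
proof -
  have r0: "r > 0" using r by simp
  have G: "int (r * (r - 1)) = int r * int r - int r" using r by (simp add: algebra_simps of_nat_diff)
  show ?thesis
  proof (cases "\<beta> = int r - 1")
    case True
    have a2: "\<alpha> \<noteq> int r - 2"
    proof
      assume "\<alpha> = int r - 2"
      then have "\<alpha> * int r + \<beta> = (int r - 2) * int r + (int r - 1)" using True by simp
      also have "\<dots> = int r * int r - int r - 1" by (simp add: algebra_simps)
      finally have "\<alpha> * int r + \<beta> = int (r * (r - 1)) - 1" using G by linarith
      then show False using ne by simp
    qed
    define K where "K = nat (\<alpha> + 1)"
    have iK: "int K = \<alpha> + 1" using K_def ab by simp
    have Kr: "K \<le> r - 2" using iK ab a2 r by linarith
    define M where "M = K * r + 1"
    have r1: "1 < r" using r by simp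
    have "int M - 2 = (\<alpha> + 1) * int r - 1" using M_def iK by simp
    then have e: "\<alpha> * int r + \<beta> = int M - 2" using True by (simp add: algebra_simps)
    have "K * r \<le> (r - 2) * r" using Kr by (rule mult_le_mono1)
    moreover have "(r - 2) * r + 1 \<le> r * (r - 1)"
    proof -
      have "int ((r - 2) * r + 1) = int r * int r - 2 * int r + 1" using r by (simp add: algebra_simps of_nat_diff)
      then have "int ((r - 2) * r + 1) \<le> int (r * (r - 1))" using G r by linarith
      then show ?thesis by (simp only: of_nat_le_iff)
    qed
    ultimately have MG: "M \<le> r * (r - 1)" using M_def by linarith
    have "M mod r = 1" "M div r = K" using M_def divmod_aux[OF r1, of K] by simp_all
    then have jcM: "jc r M" unfolding jc_def by simp
    have M1: "1 \<le> M" unfolding M_def by simp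
    show ?thesis using e MG M1 jcM by blast
  next
    case False
    then have ab2: "2 * \<beta> + 2 \<le> \<alpha>" using ab by simp
    define K j where "K = nat \<alpha>" "j = nat \<beta> + 2"
    have iK: "int K = \<alpha>" "int j = \<beta> + 2" using K_j_def ab ab2 by simp_all
    have jr: "j < r" using iK ab ab2 by linarith
    have Kr: "K \<le> r - 2" using iK ab r by linarith
    define M where "M = K * r + j"
    have e: "\<alpha> * int r + \<beta> = int M - 2" using M_def iK by simp
    have "M mod r = j" "M div r = K" using M_def jr by simp_all
    moreover have "j \<le> K div 2 + 1" using iK ab2 by linarith
    ultimately have "jc r M" unfolding jc_def using K_j_def by simp
    moreover have "M \<le> r * (r - 1)"
    proof -
      have "K * r \<le> (r - 2) * r" using Kr by (rule mult_le_mono1)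
      moreover have "(r - 2) * r + r \<le> r * (r - 1)"
      proof -
        have "int ((r - 2) * r + r) = int r * int r - int r" using r by (simp add: algebra_simps of_nat_diff)
        then show ?thesis using G by linarith
      qed
      ultimately show ?thesis using M_def jr by linarith
    qed
    moreover have "1 \<le> M" using M_def K_j_def by simp
    ultimately show ?thesis using e by blast
  qed
qed

theorem lemma3p16:
  fixes r :: nat
  assumes "r \<ge> 2"
  shows "card (jumps r) = RR r (2 * genus r - 2)
       \<and> RR r (2 * genus r - 2) = (if even r then r^2 div 4 else (r^2 - 1) div 4)
       \<and> jumps r = {\<alpha> * int r + \<beta> | \<alpha> \<beta>. -1 \<le> \<alpha> \<and> \<alpha> \<le> int r - 2 \<and> 0 \<le> \<beta> \<and> \<beta> \<le> int r - 1
                    \<and> (2 * \<beta> + 2 \<le> \<alpha> \<or> \<beta> = int r - 1)} - {2 * genus r - 1}"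
proof -
  have RRtop: "RR r (2 * genus r - 2) = Phi r (r * (r - 1))"
  proof -
    have "RR r (int (r * (r - 1)) - 2) = Phi r (nat (int (r * (r - 1)) - 2 + 2))"
      by (rule RR_Phi[OF assms]) auto
    moreover have "nat (int (r * (r - 1)) - 2 + 2) = r * (r - 1)" by (simp only: diff_add_cancel nat_int)
    ultimately show ?thesis unfolding two_genus by simp
  qed
  have set: "jumps r = {\<alpha> * int r + \<beta> | \<alpha> \<beta>. -1 \<le> \<alpha> \<and> \<alpha> \<le> int r - 2 \<and> 0 \<le> \<beta> \<and> \<beta> \<le> int r - 1
                    \<and> (2 * \<beta> + 2 \<le> \<alpha> \<or> \<beta> = int r - 1)} - {2 * genus r - 1}"
    unfolding jumps_M[OF assms] two_genus
  proof (intro equalityI subsetI)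
    fix N assume "N \<in> (\<lambda>M. int M - 2) ` {M \<in> {1..r * (r - 1)}. jc r M}"
    then obtain M where M: "N = int M - 2" "1 \<le> M" "M \<le> r * (r - 1)" "jc r M" by auto
    have "int M \<le> int (r * (r - 1))" using M(3) by (simp only: of_nat_le_iff)
    then have "N \<noteq> int (r * (r - 1)) - 1" using M(1) by linarith
    moreover obtain \<alpha> \<beta> where "int M - 2 = \<alpha> * int r + \<beta> \<and> -1 \<le> \<alpha> \<and> \<alpha> \<le> int r - 2 \<and> 0 \<le> \<beta> \<and> \<beta> \<le> int r - 1
                    \<and> (2 * \<beta> + 2 \<le> \<alpha> \<or> \<beta> = int r - 1)" using char_sub[OF assms M(2-4)] by blast
    ultimately show "N \<in> {\<alpha> * int r + \<beta> | \<alpha> \<beta>. -1 \<le> \<alpha> \<and> \<alpha> \<le> int r - 2 \<and> 0 \<le> \<beta> \<and> \<beta> \<le> int r - 1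
                    \<and> (2 * \<beta> + 2 \<le> \<alpha> \<or> \<beta> = int r - 1)} - {int (r * (r - 1)) - 1}"
      using M(1) by blast
  next
    fix N assume "N \<in> {\<alpha> * int r + \<beta> | \<alpha> \<beta>. -1 \<le> \<alpha> \<and> \<alpha> \<le> int r - 2 \<and> 0 \<le> \<beta> \<and> \<beta> \<le> int r - 1
                    \<and> (2 * \<beta> + 2 \<le> \<alpha> \<or> \<beta> = int r - 1)} - {int (r * (r - 1)) - 1}"
    then obtain \<alpha> \<beta> where ab: "N = \<alpha> * int r + \<beta>" "-1 \<le> \<alpha>" "\<alpha> \<le> int r - 2" "0 \<le> \<beta>" "\<beta> \<le> int r - 1"
                    "2 * \<beta> + 2 \<le> \<alpha> \<or> \<beta> = int r - 1" and ne: "N \<noteq> int (r * (r - 1)) - 1" by blast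
    obtain M where "\<alpha> * int r + \<beta> = int M - 2" "1 \<le> M" "M \<le> r * (r - 1)" "jc r M"
      using char_sup[OF assms ab(2-6)] ne ab(1) by blast
    then show "N \<in> (\<lambda>M. int M - 2) ` {M \<in> {1..r * (r - 1)}. jc r M}" using ab(1) by auto
  qed
  show ?thesis using card_jumps[OF assms] RRtop Phi_top[OF assms] set by simp
qed

end
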